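(* For all formulas $\varphi,\psi,\vartheta$ and every program term $A$: (1) $(\neg\varphi)A\preceq\varphi\Rightarrow\psi$ and $A\psi\preceq\varphi\Rightarrow\psi$; in particular $\neg\varphi\preceq\varphi\Rightarrow\psi$, $\psi\preceq\varphi\Rightarrow\psi$, and the test $\varphi\to\psi$ satisfies $(\varphi\to\psi)\preceq\varphi\Rightarrow\psi$. (2) $\vartheta\preceq\varphi\Rightarrow\psi$ (with $\vartheta$ used as a test) iff $\vartheta\models\varphi\to\psi$; consequently, in every $\mathcal L$-model $M$, $$\to_{\varphi\Rightarrow\psi}=\to_{\varphi\to\psi}\cup\bigcup\{\to_A: A\in\tilde\Sigma^+,\ \forall w,w'\,(w\to_Aw'\text{ and }w\models^M\varphi\text{ imply }w'\models^M\psi)\},$$ where $\tilde\Sigma^+$ denotes finite nonempty compositions of elements of $\tilde\Sigma$.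
   Context: Fix countable, nonempty, pairwise disjoint sets $\mathrm{AtF}$ (atomic formulas), $\mathrm{AtP}$ (atomic programs) and $I$ (agent names). The formulas $\mathcal L_s$ and programs $\mathcal L_a$ of Type PDL ($\tau$PDL) are generated by $\varphi::=p\mid\neg\varphi\mid\forall A.\varphi\mid \mathsf C_\imath A$ and $A::=a\mid\varphi\mid\varphi\Rightarrow\varphi\mid AA\mid A+A\mid A^*$ with $p\in\mathrm{AtF}$, $a\in\mathrm{AtP}$, $\imath\in I$ (a formula used as a program is a test; $AB$ is sequential composition, $A+B$ choice, $\forall A.\varphi$ is the box $[A]\varphi$). Other connectives are abbreviations, e.g. $\varphi\to\psi:=\forall\varphi.\psi$. $\mathsf{tt}$ is a fixed tautology, $\mathsf{ff}=\neg\mathsf{tt}$, $\Omega:=\mathsf{tt}\Rightarrow\mathsf{tt}$, $\mathrm{AtP}_\Omega=\mathrm{AtP}\cup\{\Omega\}$. $\Sigma$ is the set of programs of the forms $a$, $\varphi$, $\varphi\Rightarrow\psi$; $\tilde\Sigma$ the set of programs of the forms $a$, $\varphi\Rightarrow\psi$; $\Sigma^+$ the finite nonempty sequential compositions of elements of $\Sigma$. An $\mathcal L$-model $M$ consists of a nonempty set $W$, a relation $\to_a\subseteq W\times W$ for each $a\in\mathrm{AtP}$, a valuation $\rho:\mathrm{AtF}\to2^W$, and for each $\imath\in I$, $w\in W$ a set $\imath^M(w)\subseteq\bigcup\{\to_A:A\in\Sigma^+\}$. Interpretation: $[\![p]\!]=\rho(p)$, $[\![\neg\varphi]\!]=W\setminus[\![\varphi]\!]$,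 $[\![\forall A.\varphi]\!]=\{w:\forall w'(w\to_Aw'\Rightarrow w'\in[\![\varphi]\!])\}$; $\to_\varphi=\{(w,w):w\in[\![\varphi]\!]\}$, $\to_{AB}=\to_A\circ\to_B$ (first $A$ then $B$), $\to_{A+B}=\to_A\cup\to_B$, $\to_{A^*}=\bigcup_{n\ge0}(\to_A)^n$, $\to_{\varphi\Rightarrow\psi}=\bigcup\{\to_A: A\in\Sigma^+,\ \forall w\in[\![\varphi]\!]\,\forall w'(w\to_Aw'\Rightarrow w'\in[\![\psi]\!])\}$. Capabilities: $[\![\mathsf C_\imath a]\!]=\{w:\to_a\subseteq\imath^M(w)\}$, $[\![\mathsf C_\imath\varphi]\!]=W$, $[\![\mathsf C_\imath(\varphi\Rightarrow\psi)]\!]=\{w:\to_{\varphi\Rightarrow\psi}\subseteq\imath^M(w)\}$, $[\![\mathsf C_\imath(AB)]\!]=\{w\in[\![\mathsf C_\imath A]\!]:\forall w'(w\to_Aw'\Rightarrow w'\in[\![\mathsf C_\imath B]\!])\}$, $[\![\mathsf C_\imath(A+B)]\!]=[\![\mathsf C_\imath A]\!]\cap[\![\mathsf C_\imath B]\!]$, $[\![\mathsf C_\imath A^*]\!]=\bigcup\{[\![\varphi]\!]:[\![\varphi]\!]\subseteq[\![\mathsf C_\imath A]\!]\cap[\![\forall A.\varphi]\!]\}$. Normality condition: $\imath^M(w)=\bigcup\{\to_{\varphi\Rightarrow\psi}:w\in[\![\mathsf C_\imath(\varphi\Rightarrow\psi)]\!]\}\cup\bigcup\{\to_a:w\in[\![\mathsf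 C_\imath a]\!]\}$. We write $w\models^M\varphi$ iff $w\in[\![\varphi]\!]$; $\varphi$ is valid if true at every state of every $\mathcal L$-model; $\varphi\equiv\psi$ means $[\![\varphi]\!]=[\![\psi]\!]$ in every $\mathcal L$-model; $\vartheta\models\chi$ means every state of every model satisfying $\vartheta$ satisfies $\chi$. For programs, $A\preceq B$ means $\to_A\subseteq\to_B$ in every $\mathcal L$-model (for a sequence, $A_1A_2\cdots A_n\preceq B$ refers to the composed relation). *)

theory Defs
  imports "HOL-Library.Countable"
begin

text \<open>Atomic formulas, atomic programs and agent names are
  countable types ('p, 'a, 'i); type variables are nonempty, and the three sets
  are disjoint because they live in different types.\<close>

datatype ('p::countable, 'a::countable, 'i::countable) fm =
    Atom 'p
  | Neg "('p,'a,'i) fm"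
  | Box "('p,'a,'i) prog" "('p,'a,'i) fm"
  | Cap 'i "('p,'a,'i) prog"
and ('p, 'a, 'i) prog =
    AtP 'a
  | Test "('p,'a,'i) fm"
  | Arrow "('p,'a,'i) fm" "('p,'a,'i) fm"
  | Seq "('p,'a,'i) prog" "('p,'a,'i) prog"
  | Choice "('p,'a,'i) prog" "('p,'a,'i) prog"
  | Star "('p,'a,'i) prog"

definition imp :: "('p::countable,'a::countable,'i::countable) fm \<Rightarrow> ('p,'a,'i) fm \<Rightarrow> ('p,'a,'i) fm" where
  "imp \<phi> \<psi> = Box (Test \<phi>) \<psi>"

fun in_Sigma :: "('p::countable,'a::countable,'i::countable) prog \<Rightarrow> bool" where
  "in_Sigma (AtP a) = True"
| "in_Sigma (Test \<phi>) = True"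
| "in_Sigma (Arrow \<phi> \<psi>) = True"
| "in_Sigma _ = False"

fun in_Sigma_tilde :: "('p::countable,'a::countable,'i::countable) prog \<Rightarrow> bool" where
  "in_Sigma_tilde (AtP a) = True"
| "in_Sigma_tilde (Arrow \<phi> \<psi>) = True"
| "in_Sigma_tilde _ = False"

inductive Sigma_plus :: "('p::countable,'a::countable,'i::countable) prog \<Rightarrow> bool" where
  "in_Sigma A \<Longrightarrow> Sigma_plus A"
| "Sigma_plus A \<Longrightarrow> Sigma_plus B \<Longrightarrow> Sigma_plus (Seq A B)"

inductive Sigma_tilde_plus :: "('p::countable,'a::countable,'i::countable) prog \<Rightarrow> bool" where
  "in_Sigma_tilde A \<Longrightarrow> Sigma_tilde_plus A"
| "Sigma_tilde_plus A \<Longrightarrow> Sigma_tilde_plus B \<Longrightarrow> Sigma_tilde_plus (Seq A B)"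

text \<open>An L-model over state set UNIV :: 'w set: atomic relations ra, valuation val,
  agent capability sets ag, together with the interpretation I (formulas) and R
  (programs) satisfying all semantic clauses, and the normality condition.\<close>
definition lmodel ::
  "('a \<Rightarrow> 'w rel) \<Rightarrow> ('p \<Rightarrow> 'w set) \<Rightarrow> ('i \<Rightarrow> 'w \<Rightarrow> 'w rel)
   \<Rightarrow> (('p::countable,'a::countable,'i::countable) fm \<Rightarrow> 'w set) \<Rightarrow> (('p,'a,'i) prog \<Rightarrow> 'w rel) \<Rightarrow> bool" where
  "lmodel ra val ag I R \<longleftrightarrow>
     (\<forall>p. I (Atom p) = val p) \<and>
     (\<forall>\<phi>. I (Neg \<phi>) = - I \<phi>) \<and>
     (\<forall>A \<phi>. I (Box A \<phi>) = {w. \<forall>w'. (w, w') \<in> R A \<longrightarrow> w' \<in> I \<phi>}) \<and>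
     (\<forall>i a. I (Cap i (AtP a)) = {w. ra a \<subseteq> ag i w}) \<and>
     (\<forall>i \<phi>. I (Cap i (Test \<phi>)) = UNIV) \<and>
     (\<forall>i \<phi> \<psi>. I (Cap i (Arrow \<phi> \<psi>)) = {w. R (Arrow \<phi> \<psi>) \<subseteq> ag i w}) \<and>
     (\<forall>i A B. I (Cap i (Seq A B)) =
        {w \<in> I (Cap i A). \<forall>w'. (w, w') \<in> R A \<longrightarrow> w' \<in> I (Cap i B)}) \<and>
     (\<forall>i A B. I (Cap i (Choice A B)) = I (Cap i A) \<inter> I (Cap i B)) \<and>
     (\<forall>i A. I (Cap i (Star A)) =
        \<Union>{I \<phi> | \<phi>. I \<phi> \<subseteq> I (Cap i A) \<inter> I (Box A \<phi>)}) \<and>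
     (\<forall>a. R (AtP a) = ra a) \<and>
     (\<forall>\<phi>. R (Test \<phi>) = {(w, w) | w. w \<in> I \<phi>}) \<and>
     (\<forall>A B. R (Seq A B) = R A O R B) \<and>
     (\<forall>A B. R (Choice A B) = R A \<union> R B) \<and>
     (\<forall>A. R (Star A) = (\<Union>n. R A ^^ n)) \<and>
     (\<forall>\<phi> \<psi>. R (Arrow \<phi> \<psi>) =
        \<Union>{R A | A. Sigma_plus A \<and>
                     (\<forall>w \<in> I \<phi>. \<forall>w'. (w, w') \<in> R A \<longrightarrow> w' \<in> I \<psi>)}) \<and>
     (\<forall>i w. ag i w \<subseteq> \<Union>{R A | A. Sigma_plus A}) \<and>
     (\<forall>i w. ag i w =
        \<Union>{R (Arrow \<phi> \<psi>) | \<phi> \<psi>. w \<in> I (Cap i (Arrow \<phi> \<psi>))} \<union>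
        \<Union>{ra a | a. w \<in> I (Cap i (AtP a))})"

definition prog_le :: "'w itself \<Rightarrow> ('p::countable,'a::countable,'i::countable) prog \<Rightarrow> ('p,'a,'i) prog \<Rightarrow> bool" where
  "prog_le _ A B \<longleftrightarrow>
     (\<forall>(ra :: 'a \<Rightarrow> 'w rel) val ag I R. lmodel ra val ag I R \<longrightarrow> R A \<subseteq> R B)"

definition entails :: "'w itself \<Rightarrow> ('p::countable,'a::countable,'i::countable) fm \<Rightarrow> ('p,'a,'i) fm \<Rightarrow> bool" where
  "entails _ \<theta> \<chi> \<longleftrightarrow>
     (\<forall>(ra :: 'a \<Rightarrow> 'w rel) val ag I R. lmodel ra val ag I R \<longrightarrow> I \<theta> \<subseteq> I \<chi>)"

end

theory Submission
  imports Defs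
begin

lemma lmodelD:
  assumes "lmodel ra val ag I R"
  shows "R (Seq A B) = R A O R B"
    "R (Test \<phi>) = {(w, w) | w. w \<in> I \<phi>}"
    "I (Neg \<phi>) = - I \<phi>"
    "I (Box A \<phi>) = {w. \<forall>w'. (w, w') \<in> R A \<longrightarrow> w' \<in> I \<phi>}"
    "R (Choice A B) = R A \<union> R B"
    "R (Star A) = (\<Union>n. R A ^^ n)"
    "R (Arrow \<phi> \<psi>) =
        \<Union>{R A | A. Sigma_plus A \<and>
                     (\<forall>w \<in> I \<phi>. \<forall>w'. (w, w') \<in> R A \<longrightarrow> w' \<in> I \<psi>)}"
  using assms unfolding lmodel_def by (auto simp only:)

lemma SP: "Sigma_plus (Test x)" "Sigma_plus (AtP a)" "Sigma_plus (Arrow x y)"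
  by (auto intro: Sigma_plus.intros)

lemma cover:
  assumes M: "lmodel ra val ag I R"
  shows "(w, w') \<in> R (A :: ('p::countable,'a::countable,'i::countable) prog) \<Longrightarrow> \<exists>C. Sigma_plus C \<and> (w, w') \<in> R C"
proof (induction A arbitrary: w w' rule: prog.induct[where ?P1.0="\<lambda>_. True"])
  case (Atom x) show ?case by simp
next
  case (Neg x) show ?case by simp
next
  case (Box x1 x2) show ?case by simp
next
  case (Cap x1 x2) show ?case by simp
next
  case (AtP x)
  then show ?case by (intro exI[of _ "AtP x"]) (auto intro: Sigma_plus.intros SP)
next
  case (Test x)
  then show ?case by (intro exI[of _ "Test x"]) (auto intro: Sigma_plus.intros SP)
next
  case (Arrow x1 x2)
  then show ?case by (intro exI[of _ "Arrow x1 x2"]) (auto intro: Sigma_plus.intros SP)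
next
  case (Seq A1 A2)
  have "R (Seq A1 A2) = R A1 O R A2" by (rule lmodelD(1)[OF M])
  with Seq.prems obtain v where "(w,v) \<in> R A1" "(v,w') \<in> R A2" by auto
  with Seq.IH obtain C1 C2 where "Sigma_plus C1" "(w,v) \<in> R C1" "Sigma_plus C2" "(v,w') \<in> R C2"
    by blast
  moreover have "R (Seq C1 C2) = R C1 O R C2" by (rule lmodelD(1)[OF M])
  ultimately show ?case by (intro exI[of _ "Seq C1 C2"]) (auto intro: Sigma_plus.intros SP)
next
  case (Choice A1 A2)
  have "R (Choice A1 A2) = R A1 \<union> R A2" by (rule lmodelD(5)[OF M])
  with Choice show ?case by blast
next
  case (Star A)
  have RS: "R (Star A) = (\<Union>n. R A ^^ n)" by (rule lmodelD(6)[OF M])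
  have RT: "\<And>\<chi>. R (Test \<chi>) = {(w, w) | w. w \<in> I \<chi>}" by (rule lmodelD(2)[OF M])
  have RQ: "\<And>C1 C2. R (Seq C1 C2) = R C1 O R C2" by (rule lmodelD(1)[OF M])
  have RN: "\<And>\<chi>. I (Neg \<chi>) = - I \<chi>" by (rule lmodelD(3)[OF M])
  have "\<And>w w'. (w, w') \<in> R A ^^ n \<Longrightarrow> \<exists>C. Sigma_plus C \<and> (w, w') \<in> R C" for n
  proof (induction n)
    case 0
    then have e: "w' = w" by simp
    obtain p :: 'p where True by simp
    show ?case
    proof (cases "w \<in> I (Atom p)")
      case True
      then show ?thesis using e RT by (intro exI[of _ "Test (Atom p)"]) (auto intro: Sigma_plus.intros SP)
    next
      case False
      then have "w \<in> I (Neg (Atom p))" using RN by auto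
      then show ?thesis using e RT by (intro exI[of _ "Test (Neg (Atom p))"]) (auto intro: Sigma_plus.intros SP)
    qed
  next
    case (Suc n)
    then obtain v where "(w,v) \<in> R A ^^ n" "(v,w') \<in> R A" by auto
    with Suc.IH Star.IH obtain C1 C2 where "Sigma_plus C1" "(w,v) \<in> R C1" "Sigma_plus C2" "(v,w') \<in> R C2"
      by blast
    then show ?case using RQ by (intro exI[of _ "Seq C1 C2"]) (auto intro: Sigma_plus.intros SP)
  qed
  with Star.prems RS show ?case by blast
qed

theorem mainTheorem2:
  fixes \<phi> \<psi> \<theta> :: "('p::countable,'a::countable,'i::countable) fm"
    and A :: "('p,'a,'i) prog"
  shows "prog_le TYPE('w) (Seq (Test (Neg \<phi>)) A) (Arrow \<phi> \<psi>)
       \<and> prog_le TYPE('w) (Seq A (Test \<psi>)) (Arrow \<phi> \<psi>)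
       \<and> prog_le TYPE('w) (Test (Neg \<phi>)) (Arrow \<phi> \<psi>)
       \<and> prog_le TYPE('w) (Test \<psi>) (Arrow \<phi> \<psi>)
       \<and> prog_le TYPE('w) (Test (imp \<phi> \<psi>)) (Arrow \<phi> \<psi>)
       \<and> (prog_le TYPE('w) (Test \<theta>) (Arrow \<phi> \<psi>) \<longleftrightarrow> entails TYPE('w) \<theta> (imp \<phi> \<psi>))
       \<and> (\<forall>(ra :: 'a \<Rightarrow> 'w rel) val ag I R. lmodel ra val ag I R \<longrightarrow>
           R (Arrow \<phi> \<psi>) =
             R (Test (imp \<phi> \<psi>)) \<union>
             \<Union>{R B | B. Sigma_tilde_plus B \<and>
                    (\<forall>w w'. (w, w') \<in> R B \<and> w \<in> I \<phi> \<longrightarrow> w' \<in> I \<psi>)})"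
proof -
  have key: "R (Arrow \<phi> \<psi>) = \<Union>{R C | C. Sigma_plus C \<and>
                     (\<forall>w \<in> I \<phi>. \<forall>w'. (w, w') \<in> R C \<longrightarrow> w' \<in> I \<psi>)}"
    and RT: "\<And>\<chi>. R (Test \<chi>) = {(w, w) | w. w \<in> I \<chi>}"
    and RQ: "\<And>C1 C2. R (Seq C1 C2) = R C1 O R C2"
    and RN: "\<And>\<chi>. I (Neg \<chi>) = - I \<chi>"
    and RB: "\<And>B \<chi>. I (Box B \<chi>) = {w. \<forall>w'. (w, w') \<in> R B \<longrightarrow> w' \<in> I \<chi>}"
    if M: "lmodel ra val ag I R" for ra val ag and I :: "('p,'a,'i) fm \<Rightarrow> 'w set" and R
    by (rule lmodelD[OF M])+
  have imp_iff: "w \<in> I (imp \<phi> \<psi>) \<longleftrightarrow> (w \<in> I \<phi> \<longrightarrow> w \<in> I \<psi>)"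
    if M: "lmodel ra val ag I R" for ra val ag and I :: "('p,'a,'i) fm \<Rightarrow> 'w set" and R and w
    using RB[OF M] RT[OF M] unfolding imp_def by auto
  have intoA: "(w,w') \<in> R (Arrow \<phi> \<psi>)" if M: "lmodel ra val ag I R" "Sigma_plus C" "(w,w') \<in> R C"
     "\<forall>w \<in> I \<phi>. \<forall>w'. (w, w') \<in> R C \<longrightarrow> w' \<in> I \<psi>"
    for ra val ag and I :: "('p,'a,'i) fm \<Rightarrow> 'w set" and R and w w' C
    using key[OF M(1)] that by blast
  have propA: "w' \<in> I \<psi>" if M: "lmodel ra val ag I R" "(w,w') \<in> R (Arrow \<phi> \<psi>)" "w \<in> I \<phi>"
    for ra val ag and I :: "('p,'a,'i) fm \<Rightarrow> 'w set" and R and w w'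
    using key[OF M(1)] that by blast
  have p1: "prog_le TYPE('w) (Seq (Test (Neg \<phi>)) A) (Arrow \<phi> \<psi>)"
    unfolding prog_le_def
  proof (intro allI impI subrelI)
    fix ra val ag and I :: "('p,'a,'i) fm \<Rightarrow> 'w set" and R w w'
    assume M: "lmodel ra val ag I R" and h: "(w,w') \<in> R (Seq (Test (Neg \<phi>)) A)"
    then have w: "w \<notin> I \<phi>" and ww: "(w,w') \<in> R A" using RQ[OF M] RT[OF M] RN[OF M] by auto
    obtain C where C: "Sigma_plus C" "(w,w') \<in> R C" using cover[OF M ww] by blast
    show "(w,w') \<in> R (Arrow \<phi> \<psi>)"
      apply (rule intoA[OF M, of "Seq (Test (Neg \<phi>)) C"])
      using C w RQ[OF M] RT[OF M] RN[OF M] by (auto intro: Sigma_plus.intros SP)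
  qed
  have p2: "prog_le TYPE('w) (Seq A (Test \<psi>)) (Arrow \<phi> \<psi>)"
    unfolding prog_le_def
  proof (intro allI impI subrelI)
    fix ra val ag and I :: "('p,'a,'i) fm \<Rightarrow> 'w set" and R w w'
    assume M: "lmodel ra val ag I R" and h: "(w,w') \<in> R (Seq A (Test \<psi>))"
    then have w: "w' \<in> I \<psi>" and ww: "(w,w') \<in> R A" using RQ[OF M] RT[OF M] by auto
    obtain C where C: "Sigma_plus C" "(w,w') \<in> R C" using cover[OF M ww] by blast
    show "(w,w') \<in> R (Arrow \<phi> \<psi>)"
      apply (rule intoA[OF M, of "Seq C (Test \<psi>)"])
      using C w RQ[OF M] RT[OF M] by (auto intro: Sigma_plus.intros SP)
  qed
  have p3: "prog_le TYPE('w) (Test (Neg \<phi>)) (Arrow \<phi> \<psi>)"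
    unfolding prog_le_def
  proof (intro allI impI subrelI)
    fix ra val ag and I :: "('p,'a,'i) fm \<Rightarrow> 'w set" and R w w'
    assume M: "lmodel ra val ag I R" and h: "(w,w') \<in> R (Test (Neg \<phi>))"
    show "(w,w') \<in> R (Arrow \<phi> \<psi>)"
      apply (rule intoA[OF M, of "Test (Neg \<phi>)"])
      using h RT[OF M] RN[OF M] by (auto intro: Sigma_plus.intros SP)
  qed
  have p4: "prog_le TYPE('w) (Test \<psi>) (Arrow \<phi> \<psi>)"
    unfolding prog_le_def
  proof (intro allI impI subrelI)
    fix ra val ag and I :: "('p,'a,'i) fm \<Rightarrow> 'w set" and R w w'
    assume M: "lmodel ra val ag I R" and h: "(w,w') \<in> R (Test \<psi>)"
    show "(w,w') \<in> R (Arrow \<phi> \<psi>)"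
      apply (rule intoA[OF M, of "Test \<psi>"])
      using h RT[OF M] by (auto intro: Sigma_plus.intros SP)
  qed
  have p5: "R (Test (imp \<phi> \<psi>)) \<subseteq> R (Arrow \<phi> \<psi>)"
    if M: "lmodel ra val ag I R" for ra val ag and I :: "('p,'a,'i) fm \<Rightarrow> 'w set" and R
  proof (intro subrelI)
    fix w w' assume h: "(w,w') \<in> R (Test (imp \<phi> \<psi>))"
    show "(w,w') \<in> R (Arrow \<phi> \<psi>)"
      apply (rule intoA[OF M, of "Test (imp \<phi> \<psi>)"])
      using h RT[OF M] imp_iff[OF M] by (auto intro: Sigma_plus.intros SP)
  qed
  have p6: "prog_le TYPE('w) (Test \<theta>) (Arrow \<phi> \<psi>) \<longleftrightarrow> entails TYPE('w) \<theta> (imp \<phi> \<psi>)"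
    unfolding prog_le_def entails_def
  proof (intro iffI allI impI)
    fix ra val ag and I :: "('p,'a,'i) fm \<Rightarrow> 'w set" and R
    assume H: "\<forall>(ra :: 'a \<Rightarrow> 'w rel) val ag I R. lmodel ra val ag I R \<longrightarrow> R (Test \<theta>) \<subseteq> R (Arrow \<phi> \<psi>)"
      and M: "lmodel ra val ag I R"
    show "I \<theta> \<subseteq> I (imp \<phi> \<psi>)"
    proof
      fix w assume "w \<in> I \<theta>"
      have HM: "R (Test \<theta>) \<subseteq> R (Arrow \<phi> \<psi>)" using H M by blast
      from \<open>w \<in> I \<theta>\<close> have "(w,w) \<in> R (Test \<theta>)" using RT[OF M] by blast
      then have "(w,w) \<in> R (Arrow \<phi> \<psi>)" using HM by blast
      then show "w \<in> I (imp \<phi> \<psi>)" using propA[OF M] imp_iff[OF M] by blast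
    qed
  next
    fix ra val ag and I :: "('p,'a,'i) fm \<Rightarrow> 'w set" and R
    assume H: "\<forall>(ra :: 'a \<Rightarrow> 'w rel) val ag I R. lmodel ra val ag I R \<longrightarrow> I \<theta> \<subseteq> I (imp \<phi> \<psi>)"
      and M: "lmodel ra val ag I R"
    have HM: "I \<theta> \<subseteq> I (imp \<phi> \<psi>)" using H M by blast
    have "R (Test \<theta>) \<subseteq> R (Test (imp \<phi> \<psi>))" using HM RT[OF M] by blast
    then show "R (Test \<theta>) \<subseteq> R (Arrow \<phi> \<psi>)" using p5[OF M] by blast
  qed
  have p7: "R (Arrow \<phi> \<psi>) =
             R (Test (imp \<phi> \<psi>)) \<union>
             \<Union>{R B | B. Sigma_tilde_plus B \<and>
                    (\<forall>w w'. (w, w') \<in> R B \<and> w \<in> I \<phi> \<longrightarrow> w' \<in> I \<psi>)}"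
    if M: "lmodel ra val ag I R" for ra val ag and I :: "('p,'a,'i) fm \<Rightarrow> 'w set" and R
  proof (intro equalityI subsetI)
    fix x assume x: "x \<in> R (Arrow \<phi> \<psi>)"
    have "Sigma_tilde_plus (Arrow \<phi> \<psi>)" by (auto intro: Sigma_tilde_plus.intros)
    moreover have "\<forall>w w'. (w, w') \<in> R (Arrow \<phi> \<psi>) \<and> w \<in> I \<phi> \<longrightarrow> w' \<in> I \<psi>"
      using propA[OF M] by blast
    ultimately show "x \<in> R (Test (imp \<phi> \<psi>)) \<union>
             \<Union>{R B | B. Sigma_tilde_plus B \<and>
                    (\<forall>w w'. (w, w') \<in> R B \<and> w \<in> I \<phi> \<longrightarrow> w' \<in> I \<psi>)}" using x by blast
  next
    have st: "Sigma_tilde_plus B \<Longrightarrow> Sigma_plus B" for B :: "('p,'a,'i) prog"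
    proof (induction B rule: Sigma_tilde_plus.induct)
      case (1 A) then show ?case by (cases A) (auto intro: Sigma_plus.intros SP)
    next
      case (2 A B) then show ?case by (auto intro: Sigma_plus.intros SP)
    qed
    fix x assume x: "x \<in> R (Test (imp \<phi> \<psi>)) \<union>
             \<Union>{R B | B. Sigma_tilde_plus B \<and>
                    (\<forall>w w'. (w, w') \<in> R B \<and> w \<in> I \<phi> \<longrightarrow> w' \<in> I \<psi>)}"
    then show "x \<in> R (Arrow \<phi> \<psi>)"
    proof
      assume "x \<in> R (Test (imp \<phi> \<psi>))" then show ?thesis using p5[OF M] by blast
    next
      assume "x \<in> \<Union>{R B | B. Sigma_tilde_plus B \<and>
                    (\<forall>w w'. (w, w') \<in> R B \<and> w \<in> I \<phi> \<longrightarrow> w' \<in> I \<psi>)}"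
      then obtain B where B: "Sigma_tilde_plus B" "x \<in> R B"
        "\<forall>w w'. (w, w') \<in> R B \<and> w \<in> I \<phi> \<longrightarrow> w' \<in> I \<psi>" by blast
      obtain w w' where "x = (w,w')" by (cases x)
      then show ?thesis using intoA[OF M st[OF B(1)]] B by blast
    qed
  qed
  have p5': "prog_le TYPE('w) (Test (imp \<phi> \<psi>)) (Arrow \<phi> \<psi>)"
    unfolding prog_le_def by (intro allI impI) (rule p5)
  show ?thesis
    apply (intro conjI)
          apply (rule p1)
         apply (rule p2)
        apply (rule p3)
       apply (rule p4)
      apply (rule p5')
     apply (rule p6)
    apply (intro allI impI)
    apply (erule p7)
    done
qed

end
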